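(* Let $G^-$ and $G^+$ be entire functions with $G^-(1/2)=G^+(1/2)$ and $(G^-)'(1/2)\ne(G^+)'(1/2)$, and let $g^\pm:\mathbb R\to\mathbb C$ be the continuous function $g^\pm(b)=G^-(b)$ for $b<1/2$, $g^\pm(b)=G^+(b)$ for $b\ge1/2$. Let $0<\eta<1/2$. Then there exist an open neighbourhood $V^-_\eta$ of $0$ in $\mathbb C$ and an open neighbourhood $V^+_\eta$ of $1$ in $\mathbb C$ such that for every $b'\in[-\eta,\eta]$ and every sequence $\boldsymbol\epsilon=(\epsilon_N)_{N\ge1}$ with $\epsilon_N\in[0,1)$, $\epsilon_N\to0$, the polynomials $$P_N(z)=\sum_{\nu=0}^N\binom N\nu z^\nu(1-z)^{N-\nu}\,g^\pm\Big(b'+\nu\,\frac{1-\epsilon_N}{N}\Big)$$ converge uniformly on every compact subset of $V^-_\eta$ to $z\mapsto G^-(z+b')$ and uniformly on every compact subset of $V^+_\eta$ to $z\mapsto G^+(z+b')$, the convergence being uniform with respect to $b'\in[-\eta,\eta]$. Moreover, if $\{\boldsymbol\epsilon_{\iota'}:\iota'\in I'\}$ is a family of such sequences with $\sup_{\iota'}\epsilon_{\iota',N}\to0$ as $N\to\infty$, then these convergences (with $\boldsymbol\epsilon_{\iota'}$ in place of $\boldsymbol\epsilon$) on compact subsets of $V^-_\eta$ and of $V^+_\eta$ are also uniform with respect to $\iota'$. *)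

theory Defs
  imports "HOL-Analysis.Analysis"
begin

definition gpm :: "(complex \<Rightarrow> complex) \<Rightarrow> (complex \<Rightarrow> complex) \<Rightarrow> real \<Rightarrow> complex" where
  "gpm Gm Gp b = (if b < 1/2 then Gm (complex_of_real b) else Gp (complex_of_real b))"

definition PN :: "(complex \<Rightarrow> complex) \<Rightarrow> (complex \<Rightarrow> complex) \<Rightarrow> real \<Rightarrow> real \<Rightarrow> nat \<Rightarrow> complex \<Rightarrow> complex" where
  "PN Gm Gp b' e N z = (\<Sum>\<nu>=0..N. of_nat (N choose \<nu>) * z ^ \<nu> * (1 - z) ^ (N - \<nu>)
       * gpm Gm Gp (b' + real \<nu> * (1 - e) / real N))"

end

theory Submission imports Defs "HOL-Complex_Analysis.Complex_Analysis" begin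


fun Pp :: "complex \<Rightarrow> complex \<Rightarrow> nat \<Rightarrow> complex" where
  "Pp U h 0 = U"
| "Pp U h (Suc j) = Pp U h j * (U - of_nat (Suc j) * h)"

definition qq :: "complex \<Rightarrow> complex \<Rightarrow> nat \<Rightarrow> complex" where
  "qq U h j = fact j * h ^ j / Pp U h j"

lemma Pp_shift: "U * Pp (U - h) h j = Pp U h (Suc j)"
proof (induction j)
  case 0 then show ?case by (simp add: algebra_simps)
next
  case (Suc j)
  have "U * Pp (U - h) h (Suc j) = (U * Pp (U - h) h j) * (U - h - of_nat (Suc j) * h)"
    by (simp add: algebra_simps)
  also have "\<dots> = Pp U h (Suc j) * (U - h - of_nat (Suc j) * h)"
    by (simp only: Suc)
  also have "U - h - of_nat (Suc j) * h = U - of_nat (Suc (Suc j)) * h"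
    by (simp add: algebra_simps)
  finally show ?case by (simp only: Pp.simps(2)[of U h "Suc j"])
qed

lemma Pp_nz: "Pp U h n \<noteq> 0 \<Longrightarrow> j \<le> n \<Longrightarrow> Pp U h j \<noteq> 0"
  by (induction n) (auto simp: le_Suc_eq)

lemma qq_step:
  assumes "Pp U h (Suc j) \<noteq> 0"
  shows "qq (U - h) h j - qq U h j = qq U h (Suc j)"
proof -
  have U0: "U \<noteq> 0" using Pp_nz[OF assms, of 0] by simp
  have Pj: "Pp U h j \<noteq> 0" using Pp_nz[OF assms, of j] by simp
  have a0: "U - of_nat (Suc j) * h \<noteq> 0" using assms by simp
  have e1: "Pp (U - h) h j = Pp U h (Suc j) / U" using Pp_shift[of U h j] U0
    by (simp add: field_simps)
  define a where "a = U - of_nat (Suc j) * h"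
  define x where "x = fact j * h ^ j"
  have PS: "Pp U h (Suc j) = Pp U h j * a" by (simp add: a_def)
  have gen: "x * U / (P * a) - x / P = x * (U - a) / (P * a)" if "P \<noteq> 0" "a \<noteq> 0" for P :: complex
    using that by (simp add: field_simps)
  have Ua: "U - a = of_nat (Suc j) * h" by (simp add: a_def)
  have "qq (U - h) h j - qq U h j = x * U / (Pp U h j * a) - x / Pp U h j"
    unfolding qq_def e1 PS x_def by (simp add: field_simps)
  also have "\<dots> = x * (of_nat (Suc j) * h) / (Pp U h j * a)"
    using gen[OF Pj] a0 Ua by (simp add: a_def)
  also have "\<dots> = qq U h (Suc j)"
    unfolding qq_def PS x_def by (simp add: algebra_simps)
  finally show ?thesis .
qed

lemma sum_pascal:
  fixes a :: "nat \<Rightarrow> complex"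
  shows "(\<Sum>j=0..Suc n. of_nat (Suc n choose j) * a j)
     = (\<Sum>j=0..n. of_nat (n choose j) * a j) + (\<Sum>j=0..n. of_nat (n choose j) * a (Suc j))"
proof -
  have 1: "(\<Sum>j=0..Suc n. of_nat (Suc n choose j) * a j)
      = a 0 + (\<Sum>i=0..n. of_nat (Suc n choose Suc i) * a (Suc i))"
    by (subst sum.atLeast0_atMost_Suc_shift) simp
  have 2: "(\<Sum>i=0..n. of_nat (Suc n choose Suc i) * a (Suc i)) = (\<Sum>i=0..n. of_nat (n choose i) * a (Suc i)) + (\<Sum>i=0..n. of_nat (n choose Suc i) * a (Suc i))"
    by (simp add: sum.distrib algebra_simps)
  have 3: "(\<Sum>j=0..n. of_nat (n choose j) * a j) = (\<Sum>j=0..Suc n. of_nat (n choose j) * a j)"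
    by simp
  have 4: "(\<Sum>j=0..Suc n. of_nat (n choose j) * a j) = a 0 + (\<Sum>i=0..n. of_nat (n choose Suc i) * a (Suc i))"
    by (subst sum.atLeast0_atMost_Suc_shift) simp
  show ?thesis unfolding 1 2 3 4 by (simp add: algebra_simps)
qed

lemma newton:
  "Pp U h n \<noteq> 0 \<Longrightarrow> 1 / (U - of_nat n * h) = (\<Sum>j=0..n. of_nat (n choose j) * qq U h j)"
proof (induction n arbitrary: U)
  case 0 then show ?case by (simp add: qq_def)
next
  case (Suc n)
  have nzU: "Pp U h n \<noteq> 0" using Pp_nz[OF Suc.prems, of n] by simp
  have U0: "U \<noteq> 0" using Pp_nz[OF Suc.prems, of 0] by simp
  have nzU': "Pp (U - h) h n \<noteq> 0" using Pp_shift[of U h n] Suc.prems by auto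
  have st: "qq U h (Suc j) = qq (U - h) h j - qq U h j" if "j \<le> n" for j
    using qq_step[of U h j] Pp_nz[OF Suc.prems, of "Suc j"] that by simp
  have "(\<Sum>j=0..Suc n. of_nat (Suc n choose j) * qq U h j)
     = (\<Sum>j=0..n. of_nat (n choose j) * qq U h j) + (\<Sum>j=0..n. of_nat (n choose j) * qq U h (Suc j))"
    by (rule sum_pascal)
  also have "(\<Sum>j=0..n. of_nat (n choose j) * qq U h (Suc j))
     = (\<Sum>j=0..n. of_nat (n choose j) * qq (U - h) h j) - (\<Sum>j=0..n. of_nat (n choose j) * qq U h j)"
    by (simp add: st sum_subtractf algebra_simps)
  finally have "(\<Sum>j=0..Suc n. of_nat (Suc n choose j) * qq U h j) = (\<Sum>j=0..n. of_nat (n choose j) * qq (U - h) h j)"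
    by simp
  also have "\<dots> = 1 / (U - h - of_nat n * h)" using Suc.IH[OF nzU'] by simp
  finally show ?case by (simp add: algebra_simps)
qed

lemma bern_choose:
  fixes w :: complex
  assumes "j \<le> N"
  shows "(\<Sum>\<nu>=0..N. of_nat (N choose \<nu>) * w^\<nu> * (1-w)^(N-\<nu>) * of_nat (\<nu> choose j)) = of_nat (N choose j) * w^j"
proof -
  define f where "f \<nu> = of_nat (N choose \<nu>) * w^\<nu> * (1-w)^(N-\<nu>) * of_nat (\<nu> choose j)" for \<nu>
  have "(\<Sum>\<nu>=0..N. f \<nu>) = (\<Sum>\<nu>=j..N. f \<nu>)"
    by (rule sum.mono_neutral_right) (auto simp: f_def)
  also have "\<dots> = (\<Sum>i=0..N-j. f (i + j))"
    using sum.shift_bounds_cl_nat_ivl[of f 0 j "N-j"] assms by simp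
  also have "\<dots> = (\<Sum>i=0..N-j. of_nat (N choose j) * w^j * (of_nat ((N-j) choose i) * w^i * (1-w)^((N-j)-i)))"
  proof (rule sum.cong[OF refl])
    fix i assume i: "i \<in> {0..N-j}"
    have cm: "(N choose (i+j)) * ((i+j) choose j) = (N choose j) * ((N-j) choose i)"
      using choose_mult[of j "i+j" N] i assms by simp
    have "f (i+j) = of_nat ((N choose (i+j)) * ((i+j) choose j)) * w^(i+j) * (1-w)^(N-(i+j))"
      unfolding f_def by (simp add: algebra_simps)
    also have "\<dots> = of_nat ((N choose j) * ((N-j) choose i)) * w^(i+j) * (1-w)^((N-j)-i)"
      by (simp only: cm) (simp add: diff_diff_add add.commute)
    finally show "f (i+j) = of_nat (N choose j) * w^j * (of_nat ((N-j) choose i) * w^i * (1-w)^((N-j)-i))"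
      by (simp add: power_add algebra_simps)
  qed
  also have "\<dots> = of_nat (N choose j) * w^j * (\<Sum>i=0..N-j. of_nat ((N-j) choose i) * w^i * (1-w)^((N-j)-i))"
    by (simp only: sum_distrib_left)
  also have "(\<Sum>i=0..N-j. of_nat ((N-j) choose i) * w^i * (1-w)^((N-j)-i)) = (w + (1 - w))^(N-j)"
    by (simp only: binomial_ring[of w "1-w"] atMost_atLeast0)
  finally show ?thesis by (simp add: f_def)
qed

lemma kernel_formula:
  fixes w :: complex
  assumes "Pp U h N \<noteq> 0"
  shows "(\<Sum>\<nu>=0..N. of_nat (N choose \<nu>) * w^\<nu> * (1-w)^(N-\<nu>) / (U - of_nat \<nu> * h))
       = (\<Sum>j=0..N. of_nat (N choose j) * w^j * qq U h j)"
proof -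
  have "(\<Sum>\<nu>=0..N. of_nat (N choose \<nu>) * w^\<nu> * (1-w)^(N-\<nu>) / (U - of_nat \<nu> * h))
     = (\<Sum>\<nu>=0..N. of_nat (N choose \<nu>) * w^\<nu> * (1-w)^(N-\<nu>) * (\<Sum>j=0..N. of_nat (\<nu> choose j) * qq U h j))"
  proof (rule sum.cong[OF refl])
    fix \<nu> assume "\<nu> \<in> {0..N}"
    then have le: "\<nu> \<le> N" by simp
    have "1 / (U - of_nat \<nu> * h) = (\<Sum>j=0..\<nu>. of_nat (\<nu> choose j) * qq U h j)"
      using newton Pp_nz[OF assms le] by blast
    also have "\<dots> = (\<Sum>j=0..N. of_nat (\<nu> choose j) * qq U h j)"
      by (rule sum.mono_neutral_left) (use le in auto)
    finally show "of_nat (N choose \<nu>) * w^\<nu> * (1-w)^(N-\<nu>) / (U - of_nat \<nu> * h)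
        = of_nat (N choose \<nu>) * w^\<nu> * (1-w)^(N-\<nu>) * (\<Sum>j=0..N. of_nat (\<nu> choose j) * qq U h j)"
      by (metis (no_types, lifting) divide_inverse inverse_eq_divide)
  qed
  also have "\<dots> = (\<Sum>j=0..N. (\<Sum>\<nu>=0..N. of_nat (N choose \<nu>) * w^\<nu> * (1-w)^(N-\<nu>) * of_nat (\<nu> choose j)) * qq U h j)"
    apply (simp add: sum_distrib_left sum_distrib_right)
    apply (subst sum.swap)
    apply (simp add: mult.assoc)
    done
  also have "\<dots> = (\<Sum>j=0..N. of_nat (N choose j) * w^j * qq U h j)"
    by (rule sum.cong[OF refl]) (simp add: bern_choose)
  finally show ?thesis .
qed



lemma Pp_bounds:
  fixes U h :: complex
  assumes U: "norm U = 3" and hN: "of_nat N * norm h \<le> 1" and jN: "j \<le> N"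
  shows "2 ^ Suc j \<le> norm (Pp U h j) \<and> norm (Pp U h j) \<le> 4 ^ Suc j"
  using jN
proof (induction j)
  case 0 then show ?case using U by simp
next
  case (Suc j)
  have mh: "norm (of_nat (Suc j) * h) \<le> 1"
  proof -
    have "norm (of_nat (Suc j) * h) = real (Suc j) * norm h" by (simp only: norm_mult norm_of_nat)
    also have "\<dots> \<le> real N * norm h" using Suc.prems by (intro mult_right_mono) auto
    finally show ?thesis using hN by simp
  qed
  have a1: "2 \<le> norm (U - of_nat (Suc j) * h)"
    using norm_triangle_ineq2[of U "of_nat (Suc j) * h"] U mh by simp
  have a2: "norm (U - of_nat (Suc j) * h) \<le> 4"
    using norm_triangle_ineq4[of U "of_nat (Suc j) * h"] U mh by simp
  have ih: "2 ^ Suc j \<le> norm (Pp U h j)" "norm (Pp U h j) \<le> 4 ^ Suc j" using Suc by auto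
  have "(2::real) ^ Suc (Suc j) = 2 ^ Suc j * 2" by simp
  also have "\<dots> \<le> norm (Pp U h j) * norm (U - of_nat (Suc j) * h)"
    using ih a1 by (intro mult_mono) auto
  finally have l: "2 ^ Suc (Suc j) \<le> norm (Pp U h (Suc j))" by (simp add: norm_mult)
  have "norm (Pp U h j) * norm (U - of_nat (Suc j) * h) \<le> 4 ^ Suc j * 4"
    using ih a2 by (intro mult_mono) auto
  then have u: "norm (Pp U h (Suc j)) \<le> 4 ^ Suc (Suc j)" by (simp add: norm_mult)
  show ?case using l u by simp
qed

lemma Pp_diff:
  fixes U h :: complex
  assumes U: "norm U = 3" and hN: "of_nat N * norm h \<le> 1" and jN: "j \<le> N"
  shows "norm (U ^ Suc j - Pp U h j) \<le> (real j + 1)^2 * norm h * 4 ^ j"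
  using jN
proof (induction j)
  case 0 then show ?case by simp
next
  case (Suc j)
  have ih: "norm (U ^ Suc j - Pp U h j) \<le> (real j + 1)^2 * norm h * 4 ^ j" using Suc by auto
  have pb: "norm (Pp U h j) \<le> 4 ^ Suc j" using Pp_bounds[OF U hN, of j] Suc.prems by auto
  have nh: "norm (of_nat (Suc j) * h) = (real j + 1) * norm h" by (simp only: norm_mult norm_of_nat) simp
  have eq: "U ^ Suc (Suc j) - Pp U h (Suc j) = (U ^ Suc j - Pp U h j) * U + Pp U h j * (of_nat (Suc j) * h)"
    by (simp add: algebra_simps)
  have "norm (U ^ Suc (Suc j) - Pp U h (Suc j)) \<le> norm (U ^ Suc j - Pp U h j) * 3 + norm (Pp U h j) * ((real j + 1) * norm h)"
    unfolding eq using U nh by (intro order.trans[OF norm_triangle_ineq]) (simp only: norm_mult)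
  also have "\<dots> \<le> (real j + 1)^2 * norm h * 4 ^ j * 3 + 4 ^ Suc j * ((real j + 1) * norm h)"
    by (intro add_mono mult_right_mono ih pb) auto
  also have "\<dots> = norm h * 4 ^ j * (3 * (real j + 1)^2 + 4 * (real j + 1))"
    by (simp add: algebra_simps)
  also have "\<dots> \<le> norm h * 4 ^ j * (4 * (real (Suc j) + 1)^2)"
    by (intro mult_left_mono) (auto simp: power2_eq_square algebra_simps)
  also have "\<dots> = (real (Suc j) + 1)^2 * norm h * 4 ^ Suc j" by (simp add: algebra_simps)
  finally show ?case .
qed

definition FF :: "nat \<Rightarrow> nat \<Rightarrow> real" where
  "FF N j = real (N choose j) * fact j / real N ^ j"

lemma FF_bounds:
  assumes "N \<ge> 1" "j \<le> N"
  shows "0 \<le> FF N j \<and> FF N j \<le> 1 \<and> 1 - FF N j \<le> real j ^ 2 / real N"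
  using assms(2)
proof (induction j)
  case 0 then show ?case by (simp add: FF_def)
next
  case (Suc j)
  have jN: "j < N" using Suc by simp
  have ih: "0 \<le> FF N j" "FF N j \<le> 1" "1 - FF N j \<le> real j ^ 2 / real N" using Suc by auto
  have Npos: "real N > 0" using assms by simp
  have f1: "FF N j = fact N / (fact (N - j) * real N ^ j)"
    unfolding FF_def using fact_binomial[of j N] jN by (simp add: field_simps)
  have f2: "FF N (Suc j) = fact N / (fact (N - Suc j) * real N ^ Suc j)"
    unfolding FF_def using fact_binomial[of "Suc j" N] jN
    by (simp add: field_simps del: fact_Suc)
  have e: "N - j = Suc (N - Suc j)" using jN by simp
  have fs: "fact (N - j) = real (N - j) * (fact (N - Suc j) :: real)"
    by (simp only: e fact_Suc)
  have rec: "FF N (Suc j) = FF N j * (real N - real j) / real N"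
    unfolding f1 f2 fs using jN Npos by (simp add: field_simps of_nat_diff)
  have "0 \<le> FF N (Suc j)" unfolding rec using ih jN by auto
  moreover have "FF N (Suc j) \<le> 1"
  proof -
    have "FF N j * (real N - real j) \<le> 1 * real N" using ih jN by (intro mult_mono) auto
    then show ?thesis unfolding rec using Npos by (simp add: divide_le_eq)
  qed
  moreover have "1 - FF N (Suc j) \<le> real (Suc j) ^ 2 / real N"
  proof -
    have "1 - FF N (Suc j) = (1 - FF N j) + FF N j * real j / real N"
      unfolding rec using Npos by (simp add: field_simps)
    also have "\<dots> \<le> real j ^ 2 / real N + 1 * real j / real N"
      using ih Npos by (intro add_mono divide_right_mono mult_right_mono) auto
    also have "\<dots> = (real j ^ 2 + real j) / real N" by (simp add: add_divide_distrib)
    also have "\<dots> \<le> real (Suc j) ^ 2 / real N"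
      using Npos by (intro divide_right_mono) (auto simp: power2_eq_square algebra_simps)
    finally show ?thesis .
  qed
  ultimately show ?case by simp
qed

lemma sq_le_pow2: "(real j + 1)^2 \<le> 4 * 2 ^ j"
proof (induction j)
  case 0 then show ?case by simp
next
  case (Suc j)
  show ?case
  proof (cases "j \<le> 1")
    case True then have "j = 0 \<or> j = 1" by auto
    then show ?thesis by auto
  next
    case False
    then have j2: "real j \<ge> 2" by simp
    have "(real (Suc j) + 1)^2 \<le> 2 * (real j + 1)^2"
    proof -
      have "real j * real j \<ge> 2 * 2" using j2 by (intro mult_mono) auto
      then show ?thesis by (simp add: power2_eq_square algebra_simps)
    qed
    also have "\<dots> \<le> 2 * (4 * 2 ^ j)" using Suc by simp
    finally show ?thesis by simp
  qed
qed



lemma real_chain: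
  fixes c :: real and j :: nat
  assumes "c \<ge> 0"
  shows "(1/2)^j * (c / 2 ^ Suc j + c * 4 ^ j / (2 ^ Suc j * 3 ^ Suc j)) \<le> c * (1/3)^j"
proof -
  have e1: "(1/2::real)^j / 2 ^ Suc j = (1/4)^j / 2"
    by (simp add: power_divide power_mult_distrib field_simps flip: power_mult_distrib)
  have e2: "(1/2::real)^j * 4 ^ j / (2 ^ Suc j * 3 ^ Suc j) = (1/3)^j / 6"
  proof -
    have "(1/2::real)^j * 4^j = 2^j" by (simp add: power_divide field_simps flip: power_mult_distrib)
    then show ?thesis by (simp add: power_divide field_simps)
  qed
  have "(1/4::real)^j \<le> (1/3)^j" by (intro power_mono) auto
  have d: "(1/2)^j * (c / 2 ^ Suc j + c * 4 ^ j / (2 ^ Suc j * 3 ^ Suc j))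
     = c * ((1/2::real)^j / 2 ^ Suc j) + c * ((1/2::real)^j * 4 ^ j / (2 ^ Suc j * 3 ^ Suc j))"
    by (simp add: field_simps)
  have "(1/2)^j * (c / 2 ^ Suc j + c * 4 ^ j / (2 ^ Suc j * 3 ^ Suc j)) = c * ((1/4)^j / 2 + (1/3)^j / 6)"
    unfolding d e1 e2 by (simp add: algebra_simps)
  also have "\<dots> \<le> c * ((1/3)^j / 2 + (1/3)^j / 6)"
    using \<open>(1/4::real)^j \<le> (1/3)^j\<close> assms by (intro mult_left_mono) auto
  also have "\<dots> \<le> c * (1/3)^j" using assms by (intro mult_left_mono) auto
  finally show ?thesis .
qed


lemma term_est:
  fixes U h w :: complex
  assumes N1: "N \<ge> 1" and U: "norm U = 3" and hN: "of_nat N * norm h \<le> 1"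
    and w: "norm w \<le> 1/2" and jN: "j \<le> N"
  shows "norm (of_nat (N choose j) * w^j * qq U h j - (of_nat N * h * w)^j / U^Suc j) \<le> 4 * (2/3)^j / real N"
proof -
  define P where "P = Pp U h j"
  define x where "x = of_nat N * h * w"
  define F where "F = FF N j"
  have Npos: "real N > 0" using N1 by simp
  have Pb: "2 ^ Suc j \<le> norm P" "norm P \<le> 4 ^ Suc j" using Pp_bounds[OF U hN jN] by (auto simp: P_def)
  have "(0::real) < 2 ^ Suc j" by simp
  then have "0 < norm P" using Pb(1) by linarith
  then have P0: "P \<noteq> 0" by auto
  have U0: "U \<noteq> 0" using U by auto
  have Fb: "0 \<le> F" "F \<le> 1" "1 - F \<le> real j ^ 2 / real N" using FF_bounds[OF N1 jN] by (auto simp: F_def)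
  have h1: "norm h \<le> 1 / real N" using hN Npos by (simp add: field_simps)
  have xb: "norm x \<le> 1/2"
  proof -
    have "norm x = (real N * norm h) * norm w" by (simp add: x_def norm_mult)
    also have "\<dots> \<le> 1 * (1/2)" using hN w by (intro mult_mono) auto
    finally show ?thesis by simp
  qed
  have key: "of_nat (N choose j) * w^j * qq U h j = of_real F * x^j / P"
  proof -
    have "of_real F * x^j / P = of_nat (N choose j) * fact j / of_nat N ^ j * (of_nat N ^ j * h ^ j * w ^ j) / P"
      by (simp add: F_def FF_def x_def power_mult_distrib)
    also have "\<dots> = of_nat (N choose j) * w^j * qq U h j"
      using Npos by (simp add: qq_def P_def field_simps)
    finally show ?thesis by simp
  qed
  have T: "of_nat (N choose j) * w^j * qq U h j - x^j / U^Suc j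
      = x^j * ((of_real F - 1) / P + (U ^ Suc j - P) / (P * U ^ Suc j))"
  proof -
    have "(of_real F - 1) / P + (U ^ Suc j - P) / (P * U ^ Suc j) = of_real F / P - 1 / U ^ Suc j"
      using P0 U0 by (simp add: field_simps)
    then show ?thesis unfolding key using P0 U0 by (simp only:) (simp add: field_simps)
  qed
  have A: "norm (of_real F - 1 :: complex) \<le> (real j + 1)^2 / real N"
  proof -
    have "norm (of_real F - 1 :: complex) = norm (of_real (F - 1) :: complex)" by simp
    also have "\<dots> = 1 - F" using Fb(2) by (simp only: norm_of_real)
    also have "\<dots> \<le> real j ^ 2 / real N" by (rule Fb(3))
    also have "\<dots> \<le> (real j + 1)^2 / real N" using Npos by (intro divide_right_mono power_mono) auto
    finally show ?thesis .
  qed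
  have B: "norm (U ^ Suc j - P) \<le> (real j + 1)^2 * 4 ^ j / real N"
  proof -
    have "norm (U ^ Suc j - P) \<le> (real j + 1)^2 * norm h * 4 ^ j" using Pp_diff[OF U hN jN] by (simp add: P_def)
    also have "\<dots> \<le> (real j + 1)^2 * (1 / real N) * 4 ^ j" using h1 by (intro mult_right_mono mult_left_mono) auto
    finally show ?thesis by simp
  qed
  define c where "c = (real j + 1)^2 / real N"
  have c0: "c \<ge> 0" using Npos by (simp add: c_def)
  have n1: "norm (x^j * ((of_real F - 1) / P + (U ^ Suc j - P) / (P * U ^ Suc j)))
      \<le> norm x ^ j * (norm (of_real F - 1 :: complex) / norm P + norm (U ^ Suc j - P) / (norm P * 3 ^ Suc j))"
  proof -
    have "norm ((of_real F - 1) / P + (U ^ Suc j - P) / (P * U ^ Suc j))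
        \<le> norm ((of_real F - 1 :: complex) / P) + norm ((U ^ Suc j - P) / (P * U ^ Suc j))"
      by (rule norm_triangle_ineq)
    also have "\<dots> = norm (of_real F - 1 :: complex) / norm P + norm (U ^ Suc j - P) / (norm P * 3 ^ Suc j)"
      using U by (simp add: norm_divide norm_mult norm_power)
    finally have "norm ((of_real F - 1) / P + (U ^ Suc j - P) / (P * U ^ Suc j)) \<le> \<dots>" .
    then show ?thesis by (simp add: norm_mult norm_power mult_left_mono)
  qed
  have t1: "norm x ^ j \<le> (1/2)^j" using xb by (intro power_mono) auto
  have p2: "(0::real) < 2 ^ Suc j" by simp
  have t2: "norm (of_real F - 1 :: complex) / norm P \<le> c / 2 ^ Suc j"
    using A Pb(1) c0 by (intro frac_le) (auto simp: c_def)
  have t3: "norm (U ^ Suc j - P) / (norm P * 3 ^ Suc j) \<le> c * 4 ^ j / (2 ^ Suc j * 3 ^ Suc j)"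
  proof (rule frac_le)
    show "0 \<le> c * 4 ^ j" using c0 by simp
    show "norm (U ^ Suc j - P) \<le> c * 4 ^ j" using B by (simp add: c_def)
    show "0 < (2::real) ^ Suc j * 3 ^ Suc j" by simp
    show "2 ^ Suc j * 3 ^ Suc j \<le> norm P * 3 ^ Suc j" using Pb(1) by (intro mult_right_mono) auto
  qed
  have n2: "norm x ^ j * (norm (of_real F - 1 :: complex) / norm P + norm (U ^ Suc j - P) / (norm P * 3 ^ Suc j))
      \<le> (1/2)^j * (c / 2 ^ Suc j + c * 4 ^ j / (2 ^ Suc j * 3 ^ Suc j))"
    by (rule mult_mono[OF t1 add_mono[OF t2 t3]]) auto
  note n12 = order.trans[OF n1 n2]
  have "norm (x^j * ((of_real F - 1) / P + (U ^ Suc j - P) / (P * U ^ Suc j))) \<le> (1/2)^j * (c / 2 ^ Suc j + c * 4 ^ j / (2 ^ Suc j * 3 ^ Suc j))"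
    by (rule n12)
  also have "\<dots> \<le> c * (1/3)^j" by (rule real_chain[OF c0])
  also have "\<dots> \<le> 4 * (2/3)^j / real N"
  proof -
    have "c * (1/3)^j = (real j + 1)^2 * (1/3)^j / real N" by (simp add: c_def)
    also have "\<dots> \<le> (4 * 2^j) * (1/3)^j / real N"
      using Npos by (intro divide_right_mono mult_right_mono sq_le_pow2) auto
    also have "\<dots> = 4 * (2/3)^j / real N" by (simp add: power_divide)
    finally show ?thesis .
  qed
  finally have "norm (of_nat (N choose j) * w^j * qq U h j - x^j / U^Suc j) \<le> 4 * (2/3)^j / real N"
    unfolding T .
  then show ?thesis unfolding x_def .
qed



lemma geo_id:
  fixes U x :: complex
  assumes "U \<noteq> 0" "U \<noteq> x"
  shows "1 / (U - x) = (\<Sum>j=0..N. x^j / U^Suc j) + x^Suc N / (U^Suc N * (U - x))"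
proof -
  define r where "r = x / U"
  have r1: "1 - r \<noteq> 0" using assms by (simp add: r_def field_simps)
  have gp: "(1 - r) * (\<Sum>i\<le>N. r^i) = 1 - r^Suc N" by (rule sum_gp_basic)
  have s: "(\<Sum>j=0..N. x^j / U^Suc j) = (1 / U) * (\<Sum>i\<le>N. r^i)"
    by (simp add: atMost_atLeast0 sum_distrib_left r_def power_divide)
  have "(\<Sum>i\<le>N. r^i) = (1 - r^Suc N) / (1 - r)" using gp r1 by (simp add: field_simps)
  moreover have "1 - r = (U - x) / U" using assms by (simp add: r_def field_simps)
  ultimately have S: "(\<Sum>j=0..N. x^j / U^Suc j) = (1 - r^Suc N) / (U - x)"
    unfolding s using assms by simp
  have T: "x^Suc N / (U^Suc N * (U - x)) = r^Suc N / (U - x)"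
    by (simp add: r_def power_divide)
  show ?thesis unfolding S T by (simp add: add_divide_distrib[symmetric])
qed

lemma kernel_est:
  fixes U h w :: complex
  assumes N1: "N \<ge> 1" and U: "norm U = 3" and hN: "of_nat N * norm h \<le> 1"
    and w: "norm w \<le> 1/2"
  shows "norm ((\<Sum>\<nu>=0..N. of_nat (N choose \<nu>) * w^\<nu> * (1-w)^(N-\<nu>) / (U - of_nat \<nu> * h))
           - 1 / (U - of_nat N * h * w)) \<le> 13 / real N"
proof -
  define x where "x = of_nat N * h * w"
  have Npos: "real N > 0" using N1 by simp
  have "(0::real) < 2 ^ Suc N" by simp
  then have "0 < norm (Pp U h N)" using Pp_bounds[OF U hN order.refl] by linarith
  then have PN0: "Pp U h N \<noteq> 0" by auto
  have xb: "norm x \<le> 1/2"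
  proof -
    have "norm x = (real N * norm h) * norm w" by (simp add: x_def norm_mult)
    also have "\<dots> \<le> 1 * (1/2)" using hN w by (intro mult_mono) auto
    finally show ?thesis by simp
  qed
  have Ux: "norm (U - x) \<ge> 5/2" using norm_triangle_ineq2[of U x] U xb by simp
  then have Ux0: "U \<noteq> x" by auto
  have U0: "U \<noteq> 0" using U by auto
  have eq: "(\<Sum>\<nu>=0..N. of_nat (N choose \<nu>) * w^\<nu> * (1-w)^(N-\<nu>) / (U - of_nat \<nu> * h)) - 1 / (U - x)
     = (\<Sum>j=0..N. of_nat (N choose j) * w^j * qq U h j - x^j / U^Suc j) - x^Suc N / (U^Suc N * (U - x))"
    unfolding kernel_formula[OF PN0] geo_id[OF U0 Ux0, of N] by (simp add: sum_subtractf)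
  have s1: "norm (\<Sum>j=0..N. of_nat (N choose j) * w^j * qq U h j - x^j / U^Suc j) \<le> (\<Sum>j=0..N. 4 * (2/3)^j / real N)"
    by (rule order.trans[OF norm_sum sum_mono]) (use term_est[OF N1 U hN w] in \<open>auto simp: x_def\<close>)
  have gsum: "(\<Sum>j=0..N. (2/3::real)^j) \<le> 3"
  proof -
    have "(1 - 2/3) * (\<Sum>i\<le>N. (2/3::real)^i) = 1 - (2/3)^Suc N" by (rule sum_gp_basic)
    then have "(\<Sum>i\<le>N. (2/3::real)^i) = 3 * (1 - (2/3)^Suc N)" by simp
    also have "\<dots> \<le> 3" by simp
    finally show ?thesis by (simp add: atMost_atLeast0)
  qed
  have s2: "(\<Sum>j=0..N. 4 * (2/3)^j / real N) \<le> 12 / real N"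
  proof -
    have "(\<Sum>j=0..N. 4 * (2/3)^j / real N) = 4 * (\<Sum>j=0..N. (2/3::real)^j) / real N"
      by (simp add: sum_divide_distrib sum_distrib_left)
    also have "\<dots> \<le> 4 * 3 / real N" using gsum Npos by (intro divide_right_mono) auto
    finally show ?thesis by simp
  qed
  have s3: "norm (x^Suc N / (U^Suc N * (U - x))) \<le> 1 / real N"
  proof -
    have "norm (x^Suc N / (U^Suc N * (U - x))) = norm x ^ Suc N / (3 ^ Suc N * norm (U - x))"
      using U by (simp add: norm_divide norm_mult norm_power)
    also have "\<dots> \<le> (1/2) ^ Suc N / (1 * 1)"
    proof -
      have p3: "(1::real) \<le> 3 ^ Suc N" by (rule one_le_power) simp
      have p4: "(1::real) * 1 \<le> 3 ^ Suc N * norm (U - x)" using p3 Ux by (intro mult_mono) auto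
      have p5: "norm x ^ Suc N \<le> (1/2) ^ Suc N" using xb by (intro power_mono) auto
      show ?thesis by (rule frac_le[OF _ p5 _ p4]) auto
    qed
    also have "\<dots> = 1 / 2 ^ Suc N" by (simp add: power_divide)
    also have "\<dots> \<le> 1 / real N"
    proof -
      have "N < 2 ^ Suc N" using less_exp[of "Suc N"] by simp
      then have "real N < real (2 ^ Suc N)" by (simp only: of_nat_less_iff)
      then have "real N < 2 ^ Suc N" by simp
      then show ?thesis using Npos by (intro divide_left_mono) auto
    qed
    finally show ?thesis .
  qed
  have "norm ((\<Sum>\<nu>=0..N. of_nat (N choose \<nu>) * w^\<nu> * (1-w)^(N-\<nu>) / (U - of_nat \<nu> * h)) - 1 / (U - x))
      \<le> 12 / real N + 1 / real N"
  proof -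
    have "norm ((\<Sum>j=0..N. of_nat (N choose j) * w^j * qq U h j - x^j / U^Suc j) - x^Suc N / (U^Suc N * (U - x)))
       \<le> norm (\<Sum>j=0..N. of_nat (N choose j) * w^j * qq U h j - x^j / U^Suc j) + norm (x^Suc N / (U^Suc N * (U - x)))"
      by (rule norm_triangle_ineq4)
    then show ?thesis unfolding eq using s1 s2 s3 by linarith
  qed
  then show ?thesis by (simp add: x_def add_divide_distrib[symmetric])
qed



lemma approx_holo:
  fixes G :: "complex \<Rightarrow> complex" and y h w :: complex
  assumes holo: "G holomorphic_on UNIV" and M: "\<forall>u\<in>cball 0 5. norm (G u) \<le> M"
    and y: "norm y \<le> 2" and N1: "N \<ge> 1" and hN: "of_nat N * norm h \<le> 1" and w: "norm w \<le> 1/2"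
  shows "norm ((\<Sum>\<nu>=0..N. of_nat (N choose \<nu>) * w^\<nu> * (1-w)^(N-\<nu>) * G (y + of_nat \<nu> * h))
              - G (y + of_nat N * h * w)) \<le> 39 * M / real N"
proof -
  define B where "B \<nu> = of_nat (N choose \<nu>) * w^\<nu> * (1-w)^(N-\<nu>)" for \<nu>
  define S where "S = (\<Sum>\<nu>=0..N. B \<nu> * G (y + of_nat \<nu> * h))"
  define T where "T = G (y + of_nat N * h * w)"
  have Npos: "real N > 0" using N1 by simp
  have M0: "M \<ge> 0" using M[rule_format, of 0] by (auto intro: order.trans[OF norm_ge_zero])
  have hc: "G holomorphic_on cball y 3" using holo by (rule holomorphic_on_subset) auto
  have nuh: "norm (of_nat \<nu> * h) \<le> 1" if "\<nu> \<le> N" for \<nu>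
  proof -
    have "norm (of_nat \<nu> * h) = real \<nu> * norm h" by (simp only: norm_mult norm_of_nat)
    also have "\<dots> \<le> real N * norm h" using that by (intro mult_right_mono) auto
    finally show ?thesis using hN by simp
  qed
  have xw: "norm (of_nat N * h * w) \<le> 1/2"
  proof -
    have "norm (of_nat N * h * w) = (real N * norm h) * norm w" by (simp add: norm_mult)
    also have "\<dots> \<le> 1 * (1/2)" using hN w by (intro mult_mono) auto
    finally show ?thesis by simp
  qed
  have ci: "((\<lambda>u. G u / (u - (y + of_nat \<nu> * h))) has_contour_integral (2 * of_real pi * \<i> * G (y + of_nat \<nu> * h))) (circlepath y 3)"
    if "\<nu> \<in> {0..N}" for \<nu>
    using that nuh[of \<nu>] by (intro Cauchy_integral_circlepath_simple[OF hc]) auto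
  have cs: "((\<lambda>u. \<Sum>\<nu>=0..N. B \<nu> * (G u / (u - (y + of_nat \<nu> * h)))) has_contour_integral
            (\<Sum>\<nu>=0..N. B \<nu> * (2 * of_real pi * \<i> * G (y + of_nat \<nu> * h)))) (circlepath y 3)"
    by (intro has_contour_integral_sum has_contour_integral_lmul ci) auto
  have ct: "((\<lambda>u. G u / (u - (y + of_nat N * h * w))) has_contour_integral (2 * of_real pi * \<i> * T)) (circlepath y 3)"
    unfolding T_def using xw by (intro Cauchy_integral_circlepath_simple[OF hc]) auto
  have cd: "((\<lambda>u. (\<Sum>\<nu>=0..N. B \<nu> * (G u / (u - (y + of_nat \<nu> * h)))) - G u / (u - (y + of_nat N * h * w)))
            has_contour_integral (2 * of_real pi * \<i> * (S - T))) (circlepath y 3)"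
  proof -
    have "(\<Sum>\<nu>=0..N. B \<nu> * (2 * of_real pi * \<i> * G (y + of_nat \<nu> * h))) - 2 * of_real pi * \<i> * T
        = 2 * of_real pi * \<i> * (S - T)"
      by (simp add: S_def sum_distrib_left algebra_simps)
    then show ?thesis using has_contour_integral_diff[OF cs ct] by simp
  qed
  have bnd: "norm ((\<Sum>\<nu>=0..N. B \<nu> * (G u / (u - (y + of_nat \<nu> * h)))) - G u / (u - (y + of_nat N * h * w)))
      \<le> M * (13 / real N)" if u: "norm (u - y) = 3" for u
  proof -
    have "norm u \<le> norm y + norm (u - y)" using norm_triangle_ineq[of y "u - y"] by simp
    then have "u \<in> cball 0 5" using y u by simp
    then have Gu: "norm (G u) \<le> M" using M by blast
    have eq: "(\<Sum>\<nu>=0..N. B \<nu> * (G u / (u - (y + of_nat \<nu> * h)))) - G u / (u - (y + of_nat N * h * w))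
       = G u * ((\<Sum>\<nu>=0..N. of_nat (N choose \<nu>) * w^\<nu> * (1-w)^(N-\<nu>) / ((u - y) - of_nat \<nu> * h))
                - 1 / ((u - y) - of_nat N * h * w))"
      by (simp add: B_def sum_distrib_left right_diff_distrib diff_diff_eq mult.commute mult.left_commute)
    have "norm ((\<Sum>\<nu>=0..N. of_nat (N choose \<nu>) * w^\<nu> * (1-w)^(N-\<nu>) / ((u - y) - of_nat \<nu> * h))
                - 1 / ((u - y) - of_nat N * h * w)) \<le> 13 / real N"
      by (rule kernel_est[OF N1 u hN w])
    then show ?thesis unfolding eq norm_mult using Gu M0 by (intro mult_mono) auto
  qed
  have "norm (2 * of_real pi * \<i> * (S - T)) \<le> M * (13 / real N) * (2 * pi * 3)"
    by (rule has_contour_integral_bound_circlepath[OF cd]) (use bnd M0 Npos in auto)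
  moreover have "norm (2 * of_real pi * \<i> * (S - T)) = 2 * pi * norm (S - T)"
    by (simp only: norm_mult norm_of_real norm_numeral norm_ii) (simp add: pi_gt_zero)
  ultimately have "2 * pi * norm (S - T) \<le> 2 * pi * (39 * M / real N)"
    by (simp add: field_simps)
  then have "norm (S - T) \<le> 39 * M / real N" by (rule mult_left_le_imp_le) (simp add: pi_gt_zero)
  then show ?thesis by (simp add: S_def T_def B_def)
qed



lemma chernoff:
  fixes w :: complex and k N :: nat
  assumes wb: "norm w \<le> 1 / (4^k + 1)"
  shows "(\<Sum>\<nu>\<in>{\<nu>\<in>{0..N}. N \<le> k*\<nu>}. norm (of_nat (N choose \<nu>) * w^\<nu> * (1-w)^(N-\<nu>))) \<le> (1/2)^N"
proof -
  define a where "a = norm w"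
  have a0: "a \<ge> 0" by (simp add: a_def)
  have c: "(0::real) < 4^k + 1" by (simp add: add_pos_pos)
  have ak: "a * (4^k + 1) \<le> 1" using pos_le_divide_eq[OF c, of a 1] wb unfolding a_def by simp
  define f where "f \<nu> = real (N choose \<nu>) * ((4^k) * a)^\<nu> * (1 + a)^(N-\<nu>) / 4^N" for \<nu>
  have t: "norm (of_nat (N choose \<nu>) * w^\<nu> * (1-w)^(N-\<nu>)) \<le> f \<nu>" if "N \<le> k*\<nu>" for \<nu>
  proof -
    have n1: "norm (1 - w) \<le> 1 + a" using norm_triangle_ineq4[of 1 w] by (simp add: a_def)
    have "norm (of_nat (N choose \<nu>) * w^\<nu> * (1-w)^(N-\<nu>)) = real (N choose \<nu>) * a^\<nu> * norm (1-w)^(N-\<nu>)"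
      by (simp add: norm_mult norm_power a_def)
    also have "\<dots> \<le> real (N choose \<nu>) * a^\<nu> * (1 + a)^(N-\<nu>)"
      using n1 a0 by (intro mult_left_mono power_mono) auto
    also have "\<dots> = real (N choose \<nu>) * a^\<nu> * (1 + a)^(N-\<nu>) * 1" by simp
    also have "\<dots> \<le> real (N choose \<nu>) * a^\<nu> * (1 + a)^(N-\<nu>) * ((4^k)^\<nu> / 4^N)"
    proof (intro mult_left_mono)
      have "(4::real)^N \<le> 4^(k*\<nu>)" using that by (intro power_increasing) auto
      then show "1 \<le> ((4::real)^k)^\<nu> / 4^N" by (simp add: power_mult)
    qed (use a0 in auto)
    also have "\<dots> = f \<nu>" by (simp add: f_def power_mult_distrib)
    finally show ?thesis .
  qed
  have "(\<Sum>\<nu>\<in>{\<nu>\<in>{0..N}. N \<le> k*\<nu>}. norm (of_nat (N choose \<nu>) * w^\<nu> * (1-w)^(N-\<nu>)))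
      \<le> (\<Sum>\<nu>\<in>{\<nu>\<in>{0..N}. N \<le> k*\<nu>}. f \<nu>)"
    by (rule sum_mono) (use t in auto)
  also have "\<dots> \<le> (\<Sum>\<nu>=0..N. f \<nu>)"
    by (rule sum_mono2) (auto simp: f_def a0)
  also have "\<dots> = (4^k * a + (1 + a))^N / 4^N"
    by (simp add: f_def binomial_ring atMost_atLeast0 sum_divide_distrib)
  also have "\<dots> \<le> 2^N / 4^N"
  proof (intro divide_right_mono power_mono)
    show "4^k * a + (1 + a) \<le> 2" using ak by (simp add: algebra_simps)
  qed (use a0 in auto)
  also have "\<dots> = (1/2)^N"
  proof -
    have "(4::real)^N = 2^N * 2^N" by (simp flip: power_mult_distrib)
    then show ?thesis by (simp add: power_divide)
  qed
  finally show ?thesis .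
qed



lemma core:
  fixes G :: "complex \<Rightarrow> complex" and f :: "nat \<Rightarrow> complex" and y0 hr :: real and w :: complex
  assumes holo: "G holomorphic_on UNIV" and M: "\<forall>u\<in>cball 0 5. norm (G u) \<le> M"
    and y0: "\<bar>y0\<bar> \<le> 2" and N1: "N \<ge> 1" and hN: "real N * \<bar>hr\<bar> \<le> 1"
    and w: "norm w \<le> 1 / (4^k + 1)"
    and f: "\<forall>\<nu>\<le>N. f \<nu> = G (of_real y0 + of_nat \<nu> * of_real hr) \<or> (N \<le> k*\<nu> \<and> norm (f \<nu>) \<le> M)"
  shows "norm ((\<Sum>\<nu>=0..N. of_nat (N choose \<nu>) * w^\<nu> * (1-w)^(N-\<nu>) * f \<nu>)
           - G (of_real y0 + of_nat N * of_real hr * w)) \<le> 39 * M / real N + 2 * M * (1/2)^N"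
proof -
  define B where "B \<nu> = of_nat (N choose \<nu>) * w^\<nu> * (1-w)^(N-\<nu>)" for \<nu>
  define p where "p \<nu> = (of_real y0 + of_nat \<nu> * of_real hr :: complex)" for \<nu>
  have M0: "M \<ge> 0" using M[rule_format, of 0] by (auto intro: order.trans[OF norm_ge_zero])
  have w2: "norm w \<le> 1/2"
  proof -
    have "(2::real) \<le> 4^k + 1" using one_le_power[of "4::real" k] by simp
    then have "1 / (4^k + 1) \<le> (1/2::real)" by (intro divide_left_mono) (auto simp: add_pos_pos)
    then show ?thesis using w by linarith
  qed
  have hN': "of_nat N * norm (of_real hr :: complex) \<le> 1" using hN by simp
  have A: "norm ((\<Sum>\<nu>=0..N. B \<nu> * G (p \<nu>)) - G (of_real y0 + of_nat N * of_real hr * w)) \<le> 39 * M / real N"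
    using approx_holo[OF holo M _ N1 hN' w2, of "of_real y0"] y0 by (simp add: B_def p_def)
  have pb: "norm (G (p \<nu>)) \<le> M" if "\<nu> \<le> N" for \<nu>
  proof -
    have "real \<nu> * \<bar>hr\<bar> \<le> real N * \<bar>hr\<bar>" using that by (intro mult_right_mono) auto
    then have "\<bar>y0 + real \<nu> * hr\<bar> \<le> 3" using y0 hN abs_mult[of "real \<nu>" hr] abs_triangle_ineq[of y0 "real \<nu> * hr"] by simp
    moreover have "p \<nu> = of_real (y0 + real \<nu> * hr)" by (simp add: p_def)
    ultimately have "norm (p \<nu>) \<le> 3" by (simp only: norm_of_real)
    then have "p \<nu> \<in> cball 0 5" by simp
    then show ?thesis using M by blast
  qed
  have termb: "norm (B \<nu> * (f \<nu> - G (p \<nu>))) \<le> (if N \<le> k*\<nu> then 2 * M * norm (B \<nu>) else 0)"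
    if "\<nu> \<in> {0..N}" for \<nu>
  proof -
    have le: "\<nu> \<le> N" using that by simp
    show ?thesis
    proof (cases "f \<nu> = G (p \<nu>)")
      case True then show ?thesis using M0 by simp
    next
      case False
      then have kk: "N \<le> k*\<nu>" and fb: "norm (f \<nu>) \<le> M" using f le by (auto simp: p_def)
      have "norm (f \<nu> - G (p \<nu>)) \<le> 2 * M" using norm_triangle_ineq4[of "f \<nu>" "G (p \<nu>)"] fb pb[OF le] by simp
      then have "norm (B \<nu> * (f \<nu> - G (p \<nu>))) \<le> norm (B \<nu>) * (2 * M)"
        unfolding norm_mult by (intro mult_left_mono) auto
      then show ?thesis using kk by (simp add: algebra_simps)
    qed
  qed
  have Bsum: "norm (\<Sum>\<nu>=0..N. B \<nu> * (f \<nu> - G (p \<nu>))) \<le> 2 * M * (1/2)^N"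
  proof -
    have "norm (\<Sum>\<nu>=0..N. B \<nu> * (f \<nu> - G (p \<nu>))) \<le> (\<Sum>\<nu>=0..N. (if N \<le> k*\<nu> then 2 * M * norm (B \<nu>) else 0))"
      by (rule order.trans[OF norm_sum sum_mono]) (rule termb)
    also have "\<dots> = 2 * M * (\<Sum>\<nu>\<in>{\<nu>\<in>{0..N}. N \<le> k*\<nu>}. norm (B \<nu>))"
      by (simp add: sum.inter_filter[symmetric] sum_distrib_left)
    also have "\<dots> \<le> 2 * M * (1/2)^N"
      using chernoff[OF w, of N] M0 by (intro mult_left_mono) (auto simp: B_def)
    finally show ?thesis .
  qed
  have eq: "(\<Sum>\<nu>=0..N. of_nat (N choose \<nu>) * w^\<nu> * (1-w)^(N-\<nu>) * f \<nu>) - G (of_real y0 + of_nat N * of_real hr * w)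
      = (\<Sum>\<nu>=0..N. B \<nu> * (f \<nu> - G (p \<nu>))) + ((\<Sum>\<nu>=0..N. B \<nu> * G (p \<nu>)) - G (of_real y0 + of_nat N * of_real hr * w))"
    by (simp add: B_def sum_subtractf algebra_simps)
  show ?thesis unfolding eq
    using norm_triangle_ineq[of "\<Sum>\<nu>=0..N. B \<nu> * (f \<nu> - G (p \<nu>))" "(\<Sum>\<nu>=0..N. B \<nu> * G (p \<nu>)) - G (of_real y0 + of_nat N * of_real hr * w)"] A Bsum
    by linarith
qed



lemma ev_small:
  fixes M \<epsilon> :: real
  assumes "\<epsilon> > 0"
  shows "\<exists>N0. \<forall>N\<ge>N0. 1 \<le> N \<and> 39 * M / real N + 2 * M * (1/2)^N < \<epsilon>"
proof -
  have t1: "(\<lambda>N. 39 * M / real N) \<longlonglongrightarrow> 0" using lim_const_over_n[of "39 * M"] by simp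
  have t2: "(\<lambda>N. 2 * M * (1/2::real)^N) \<longlonglongrightarrow> 0"
    using tendsto_mult[OF tendsto_const[of "2 * M"] LIMSEQ_power_zero[of "1/2::real"]] by simp
  have "(\<lambda>N. 39 * M / real N + 2 * M * (1/2)^N) \<longlonglongrightarrow> 0" by (rule tendsto_add_zero[OF t1 t2])
  then have "eventually (\<lambda>N. 39 * M / real N + 2 * M * (1/2)^N < \<epsilon>) sequentially"
    using order_tendstoD(2) assms by blast
  moreover have "eventually (\<lambda>N. 1 \<le> N) sequentially" by (rule eventually_ge_at_top)
  ultimately have "eventually (\<lambda>N. 1 \<le> N \<and> 39 * M / real N + 2 * M * (1/2)^N < \<epsilon>) sequentially"
    by (rule eventually_conj[rotated])
  then show ?thesis unfolding eventually_sequentially by blast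
qed

lemma unif_cont:
  fixes G :: "complex \<Rightarrow> complex"
  assumes "G holomorphic_on UNIV" "\<epsilon> > 0"
  shows "\<exists>d>0. \<forall>a\<in>cball 0 5. \<forall>b\<in>cball 0 5. norm (a - b) < d \<longrightarrow> norm (G a - G b) < \<epsilon>"
proof -
  have "continuous_on (cball 0 5) G"
    using assms(1) holomorphic_on_imp_continuous_on holomorphic_on_subset by blast
  then have "uniformly_continuous_on (cball (0::complex) 5) G"
    by (intro compact_uniformly_continuous) auto
  then obtain d where "d > 0" "\<forall>x\<in>cball 0 5. \<forall>x'\<in>cball 0 5. dist x' x < d \<longrightarrow> dist (G x') (G x) < \<epsilon>"
    using assms(2) unfolding uniformly_continuous_on_def by blast
  then show ?thesis by (auto simp: dist_norm)
qed

lemma side_m: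
  fixes Gm Gp :: "complex \<Rightarrow> complex" and \<eta> :: real and k :: nat
  assumes hm: "Gm holomorphic_on UNIV" and M: "\<forall>u\<in>cball 0 5. norm (Gm u) \<le> M \<and> norm (Gp u) \<le> M"
    and \<eta>: "0 < \<eta>" "\<eta> < 1/2" and k: "2 \<le> real k * (1/2 - \<eta>)" and \<epsilon>: "\<epsilon> > 0"
  shows "\<exists>d>0. \<exists>N0. \<forall>N\<ge>N0. \<forall>e. 0 \<le> e \<and> e < d \<longrightarrow> (\<forall>b'\<in>{-\<eta>..\<eta>}. \<forall>z\<in>ball (0::complex) (1/(4^k+1)).
          norm (PN Gm Gp b' e N z - Gm (z + of_real b')) < \<epsilon>)"
proof -
  obtain d1 where d1: "d1 > 0" "\<forall>a\<in>cball 0 5. \<forall>b\<in>cball 0 5. norm (a - b) < d1 \<longrightarrow> norm (Gm a - Gm b) < \<epsilon>/2"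
    using unif_cont[OF hm, of "\<epsilon>/2"] \<epsilon> by auto
  obtain N0 where N0: "\<forall>N\<ge>N0. 1 \<le> N \<and> 39 * M / real N + 2 * M * (1/2)^N < \<epsilon>/2"
    using ev_small[of "\<epsilon>/2" M] \<epsilon> by auto
  have w2: "1 / (4^k + 1) \<le> (1/2::real)"
  proof -
    have "(2::real) \<le> 4^k + 1" using one_le_power[of "4::real" k] by simp
    then show ?thesis by (intro divide_left_mono) (auto simp: add_pos_pos)
  qed
  have Mm: "\<forall>u\<in>cball 0 5. norm (Gm u) \<le> M" using M by blast
  show ?thesis
  proof (intro exI[of _ "min d1 (1/2)"] conjI exI[of _ N0] allI impI ballI)
    show "min d1 (1/2) > 0" using d1 by simp
    fix N e b' z
    assume NN: "N0 \<le> N" and e: "0 \<le> e \<and> e < min d1 (1/2)" and b': "b' \<in> {-\<eta>..\<eta>}" and z: "z \<in> ball (0::complex) (1/(4^k+1))"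
    have N1: "1 \<le> N" and small: "39 * M / real N + 2 * M * (1/2)^N < \<epsilon>/2" using N0 NN by auto
    have Npos: "real N > 0" using N1 by simp
    define hr where "hr = (1 - e) / real N"
    define f where "f \<nu> = gpm Gm Gp (b' + real \<nu> * (1 - e) / real N)" for \<nu>
    have zb: "norm z \<le> 1 / (4^k+1)" using z by (simp add: dist_norm)
    have hN: "real N * \<bar>hr\<bar> \<le> 1" using e Npos by (simp add: hr_def)
    have pt: "b' + real \<nu> * (1 - e) / real N = b' + real \<nu> * hr" for \<nu> by (simp add: hr_def)
    have fcond: "\<forall>\<nu>\<le>N. f \<nu> = Gm (of_real b' + of_nat \<nu> * of_real hr) \<or> (N \<le> k*\<nu> \<and> norm (f \<nu>) \<le> M)"
    proof (intro allI impI)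
      fix \<nu> assume le: "\<nu> \<le> N"
      have eqc: "complex_of_real (b' + real \<nu> * hr) = of_real b' + of_nat \<nu> * of_real hr" by simp
      show "f \<nu> = Gm (of_real b' + of_nat \<nu> * of_real hr) \<or> (N \<le> k*\<nu> \<and> norm (f \<nu>) \<le> M)"
      proof (cases "b' + real \<nu> * hr < 1/2")
        case True then show ?thesis by (simp add: f_def gpm_def pt eqc)
      next
        case False
        have hr0: "0 \<le> hr" "hr \<le> 1 / real N" using e Npos by (auto simp: hr_def divide_right_mono)
        have "real \<nu> * hr \<le> real \<nu> * (1 / real N)" using hr0 by (intro mult_left_mono) auto
        moreover have "real \<nu> * hr \<ge> 1/2 - \<eta>" using False b' by auto
        ultimately have "real \<nu> / real N \<ge> 1/2 - \<eta>" by simp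
        then have "real \<nu> \<ge> real N * (1/2 - \<eta>)" using Npos by (simp add: field_simps)
        then have "real k * real \<nu> \<ge> real N * (real k * (1/2 - \<eta>))"
          using mult_left_mono[of "real N * (1/2 - \<eta>)" "real \<nu>" "real k"] by (simp add: algebra_simps)
        moreover have "real N * (real k * (1/2 - \<eta>)) \<ge> real N * 2" using k Npos by (intro mult_left_mono) auto
        ultimately have "real N \<le> real k * real \<nu>" using Npos by linarith
        then have "real N \<le> real (k * \<nu>)" by simp
        then have kk: "N \<le> k * \<nu>" by (simp only: of_nat_le_iff)
        have "real \<nu> * hr \<le> real N * hr" using le hr0 by (intro mult_right_mono) auto
        moreover have "0 \<le> real \<nu> * hr" using hr0 by simp
        moreover have "real N * hr \<le> 1" using hN hr0 by simp
        moreover have "-\<eta> \<le> b'" "b' \<le> \<eta>" using b' by auto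
        ultimately have "\<bar>b' + real \<nu> * hr\<bar> \<le> 5" unfolding abs_le_iff using \<eta> by (intro conjI) linarith+
        then have "norm (complex_of_real (b' + real \<nu> * hr)) \<le> 5" by (simp only: norm_of_real)
        then have "norm (f \<nu>) \<le> M" using M False by (simp add: f_def gpm_def pt)
        then show ?thesis using kk by simp
      qed
    qed
    have y0: "\<bar>b'\<bar> \<le> 2" using b' \<eta> by auto
    have C: "norm ((\<Sum>\<nu>=0..N. of_nat (N choose \<nu>) * z^\<nu> * (1-z)^(N-\<nu>) * f \<nu>)
           - Gm (of_real b' + of_nat N * of_real hr * z)) \<le> 39 * M / real N + 2 * M * (1/2)^N"
      by (rule core[OF hm Mm y0 N1 hN zb fcond])
    have PNe: "PN Gm Gp b' e N z = (\<Sum>\<nu>=0..N. of_nat (N choose \<nu>) * z^\<nu> * (1-z)^(N-\<nu>) * f \<nu>)"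
      by (simp add: PN_def f_def)
    have pN: "of_real b' + of_nat N * of_real hr * z = of_real b' + (1 - of_real e) * z"
      using Npos by (simp add: hr_def)
    have zz: "norm z \<le> 1/2" using zb w2 by linarith
    have cont: "norm (Gm (of_real b' + (1 - of_real e) * z) - Gm (z + of_real b')) < \<epsilon>/2"
    proof -
      have "norm ((of_real b' + (1 - of_real e) * z) - (z + of_real b')) = e * norm z"
        using e by (simp add: algebra_simps norm_mult)
      also have "\<dots> \<le> e * 1" using zz e by (intro mult_left_mono) auto
      also have "\<dots> < d1" using e by simp
      finally have dd: "norm ((of_real b' + (1 - of_real e) * z) - (z + of_real b')) < d1" .
      have n1: "norm (of_real b' + (1 - of_real e) * z) \<le> 5"
      proof -
        have "norm (of_real b' + (1 - of_real e) * z) \<le> \<bar>b'\<bar> + norm (1 - of_real e :: complex) * norm z"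
          using norm_triangle_ineq[of "of_real b'" "(1 - of_real e) * z"] by (simp add: norm_mult)
        also have "norm (1 - of_real e :: complex) = 1 - e"
        proof -
          have "(1 - of_real e :: complex) = of_real (1 - e)" by simp
          then have "norm (1 - of_real e :: complex) = \<bar>1 - e\<bar>" by (simp only: norm_of_real)
          then show ?thesis using e by simp
        qed
        also have "(1 - e) * norm z \<le> 1 * norm z" using e by (intro mult_right_mono) auto
        finally show ?thesis using y0 zz by linarith
      qed
      have n2: "norm (z + of_real b') \<le> 5" using norm_triangle_ineq[of z "of_real b'"] zz y0 by simp
      show ?thesis using d1(2) dd n1 n2 by simp
    qed
    have "norm (PN Gm Gp b' e N z - Gm (z + of_real b'))
        \<le> norm ((\<Sum>\<nu>=0..N. of_nat (N choose \<nu>) * z^\<nu> * (1-z)^(N-\<nu>) * f \<nu>) - Gm (of_real b' + of_nat N * of_real hr * z))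
          + norm (Gm (of_real b' + (1 - of_real e) * z) - Gm (z + of_real b'))"
      unfolding PNe pN[symmetric] by (rule norm_diff_triangle_ineq[THEN order.trans[rotated]]) (simp add: norm_triangle_sub)
    then show "norm (PN Gm Gp b' e N z - Gm (z + of_real b')) < \<epsilon>"
      using C cont small pN by simp
  qed
qed



lemma PN_rev:
  "PN Gm Gp b' e N z = (\<Sum>\<mu>=0..N. of_nat (N choose \<mu>) * (1 - z)^\<mu> * (1 - (1 - z))^(N-\<mu>)
        * gpm Gm Gp (b' + real (N - \<mu>) * (1 - e) / real N))"
proof -
  have "PN Gm Gp b' e N z = (\<Sum>\<mu>=0..N. of_nat (N choose (N - \<mu>)) * z ^ (N - \<mu>) * (1 - z) ^ (N - (N - \<mu>))
       * gpm Gm Gp (b' + real (N - \<mu>) * (1 - e) / real N))"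
    unfolding PN_def by (subst sum.atLeastAtMost_rev) simp
  also have "\<dots> = (\<Sum>\<mu>=0..N. of_nat (N choose \<mu>) * (1 - z)^\<mu> * (1 - (1 - z))^(N-\<mu>)
        * gpm Gm Gp (b' + real (N - \<mu>) * (1 - e) / real N))"
  proof (rule sum.cong[OF refl])
    fix \<mu> assume "\<mu> \<in> {0..N}"
    then have le: "\<mu> \<le> N" by simp
    then have "N choose (N - \<mu>) = N choose \<mu>" using binomial_symmetric[OF le] by simp
    moreover have "N - (N - \<mu>) = \<mu>" using le by simp
    ultimately show "of_nat (N choose (N - \<mu>)) * z ^ (N - \<mu>) * (1 - z) ^ (N - (N - \<mu>))
       * gpm Gm Gp (b' + real (N - \<mu>) * (1 - e) / real N) =
       of_nat (N choose \<mu>) * (1 - z)^\<mu> * (1 - (1 - z))^(N-\<mu>) * gpm Gm Gp (b' + real (N - \<mu>) * (1 - e) / real N)"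
      by (simp add: algebra_simps)
  qed
  finally show ?thesis .
qed

lemma side_p:
  fixes Gm Gp :: "complex \<Rightarrow> complex" and \<eta> :: real and k :: nat
  assumes hp: "Gp holomorphic_on UNIV" and M: "\<forall>u\<in>cball 0 5. norm (Gm u) \<le> M \<and> norm (Gp u) \<le> M"
    and \<eta>: "0 < \<eta>" "\<eta> < 1/2" and k: "2 \<le> real k * (1/2 - \<eta>)" and \<epsilon>: "\<epsilon> > 0"
  shows "\<exists>d>0. \<exists>N0. \<forall>N\<ge>N0. \<forall>e. 0 \<le> e \<and> e < d \<longrightarrow> (\<forall>b'\<in>{-\<eta>..\<eta>}. \<forall>z\<in>ball (1::complex) (1/(4^k+1)).
          norm (PN Gm Gp b' e N z - Gp (z + of_real b')) < \<epsilon>)"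
proof -
  obtain d1 where d1: "d1 > 0" "\<forall>a\<in>cball 0 5. \<forall>b\<in>cball 0 5. norm (a - b) < d1 \<longrightarrow> norm (Gp a - Gp b) < \<epsilon>/2"
    using unif_cont[OF hp, of "\<epsilon>/2"] \<epsilon> by auto
  obtain N0 where N0: "\<forall>N\<ge>N0. 1 \<le> N \<and> 39 * M / real N + 2 * M * (1/2)^N < \<epsilon>/2"
    using ev_small[of "\<epsilon>/2" M] \<epsilon> by auto
  have w2: "1 / (4^k + 1) \<le> (1/2::real)"
  proof -
    have "(2::real) \<le> 4^k + 1" using one_le_power[of "4::real" k] by simp
    then show ?thesis by (intro divide_left_mono) (auto simp: add_pos_pos)
  qed
  have Mp: "\<forall>u\<in>cball 0 5. norm (Gp u) \<le> M" using M by blast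
  define t where "t = (1/2 - \<eta>) / 2"
  have t0: "t > 0" "t < 1/4" using \<eta> by (auto simp: t_def)
  show ?thesis
  proof (intro exI[of _ "min (d1/2) t"] conjI exI[of _ N0] allI impI ballI)
    show "min (d1/2) t > 0" using d1 t0 by simp
    fix N e b' z
    assume NN: "N0 \<le> N" and e: "0 \<le> e \<and> e < min (d1/2) t" and b': "b' \<in> {-\<eta>..\<eta>}" and z: "z \<in> ball (1::complex) (1/(4^k+1))"
    have N1: "1 \<le> N" and small: "39 * M / real N + 2 * M * (1/2)^N < \<epsilon>/2" using N0 NN by auto
    have Npos: "real N > 0" using N1 by simp
    have bb: "-\<eta> \<le> b'" "b' \<le> \<eta>" using b' by auto
    define w where "w = 1 - z"
    define hr where "hr = - ((1 - e) / real N)"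
    define y0 where "y0 = b' + (1 - e)"
    define f where "f \<mu> = gpm Gm Gp (b' + real (N - \<mu>) * (1 - e) / real N)" for \<mu>
    have wb: "norm w \<le> 1 / (4^k+1)" using z by (simp add: dist_norm w_def norm_minus_commute)
    have hr0: "hr \<le> 0" "-hr \<le> 1 / real N" using e t0 Npos by (auto simp: hr_def divide_right_mono)
    have hN: "real N * \<bar>hr\<bar> \<le> 1" using e t0 Npos by (simp add: hr_def)
    have pt: "b' + real (N - \<mu>) * (1 - e) / real N = y0 + real \<mu> * hr" if "\<mu> \<le> N" for \<mu>
      using that Npos by (simp add: hr_def y0_def of_nat_diff field_simps)
    have fcond: "\<forall>\<mu>\<le>N. f \<mu> = Gp (of_real y0 + of_nat \<mu> * of_real hr) \<or> (N \<le> k*\<mu> \<and> norm (f \<mu>) \<le> M)"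
    proof (intro allI impI)
      fix \<mu> assume le: "\<mu> \<le> N"
      have eqc: "complex_of_real (y0 + real \<mu> * hr) = of_real y0 + of_nat \<mu> * of_real hr" by simp
      have "real \<mu> * (-hr) \<le> real N * (-hr)" using le hr0 by (intro mult_right_mono) auto
      moreover have "real N * (-hr) \<le> 1" using hN hr0 by simp
      moreover have "0 \<le> real \<mu> * (-hr)" using hr0 by (intro mult_nonneg_nonneg) auto
      moreover have "0 \<le> e" "e < 1/4" using e t0 by auto
      ultimately have "\<bar>y0 + real \<mu> * hr\<bar> \<le> 5" unfolding abs_le_iff y0_def using \<eta> bb
        by (intro conjI) linarith+
      then have P5: "norm (complex_of_real (y0 + real \<mu> * hr)) \<le> 5" by (simp only: norm_of_real)
      show "f \<mu> = Gp (of_real y0 + of_nat \<mu> * of_real hr) \<or> (N \<le> k*\<mu> \<and> norm (f \<mu>) \<le> M)"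
      proof (cases "y0 + real \<mu> * hr < 1/2")
        case False then show ?thesis by (simp add: f_def gpm_def pt[OF le] eqc)
      next
        case True
        have "real \<mu> * (-hr) \<le> real \<mu> * (1 / real N)" using hr0 by (intro mult_left_mono) auto
        moreover have "real \<mu> * (-hr) \<ge> t" using True bb e unfolding y0_def t_def by auto
        ultimately have "real \<mu> / real N \<ge> t" by simp
        then have "real \<mu> \<ge> real N * t" using Npos by (simp add: field_simps)
        then have "real k * real \<mu> \<ge> real N * (real k * t)"
          using mult_left_mono[of "real N * t" "real \<mu>" "real k"] by (simp add: algebra_simps)
        moreover have "real k * t \<ge> 1" using k unfolding t_def by simp
        then have "real N * (real k * t) \<ge> real N * 1" using Npos by (intro mult_left_mono) auto
        ultimately have "real N \<le> real k * real \<mu>" using Npos by linarith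
        then have "real N \<le> real (k * \<mu>)" by simp
        then have kk: "N \<le> k * \<mu>" by (simp only: of_nat_le_iff)
        have "norm (f \<mu>) \<le> M" using M True P5 by (simp add: f_def gpm_def pt[OF le])
        then show ?thesis using kk by simp
      qed
    qed
    have y0b: "\<bar>y0\<bar> \<le> 2" using bb e t0 \<eta> unfolding y0_def abs_le_iff by (intro conjI) linarith+
    have C: "norm ((\<Sum>\<nu>=0..N. of_nat (N choose \<nu>) * w^\<nu> * (1-w)^(N-\<nu>) * f \<nu>)
           - Gp (of_real y0 + of_nat N * of_real hr * w)) \<le> 39 * M / real N + 2 * M * (1/2)^N"
      by (rule core[OF hp Mp y0b N1 hN wb fcond])
    have PNe: "PN Gm Gp b' e N z = (\<Sum>\<nu>=0..N. of_nat (N choose \<nu>) * w^\<nu> * (1-w)^(N-\<nu>) * f \<nu>)"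
      unfolding PN_rev w_def f_def by simp
    have pN: "of_real y0 + of_nat N * of_real hr * w = of_real b' + (1 - of_real e) * z"
    proof -
      have "real N * hr = -(1 - e)" using Npos by (simp add: hr_def)
      then have EQ: "of_nat N * (of_real hr :: complex) = of_real (-(1 - e))"
        by (metis of_real_mult of_real_of_nat_eq)
      show ?thesis by (simp only: EQ) (simp add: y0_def w_def algebra_simps)
    qed
    have zz: "norm z \<le> 3/2"
    proof -
      have "norm z \<le> norm (1::complex) + norm (z - 1)" using norm_triangle_ineq[of 1 "z - 1"] by simp
      moreover have "norm (z - 1) \<le> 1/2" using wb w2 by (simp add: w_def norm_minus_commute)
      ultimately show ?thesis by simp
    qed
    have y2: "\<bar>b'\<bar> \<le> 1/2" using bb \<eta> by auto
    have cont: "norm (Gp (of_real b' + (1 - of_real e) * z) - Gp (z + of_real b')) < \<epsilon>/2"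
    proof -
      have "norm ((of_real b' + (1 - of_real e) * z) - (z + of_real b')) = e * norm z"
        using e by (simp add: algebra_simps norm_mult)
      also have "\<dots> \<le> e * (3/2)" using zz e by (intro mult_left_mono) auto
      also have "\<dots> < d1" using e by simp
      finally have dd: "norm ((of_real b' + (1 - of_real e) * z) - (z + of_real b')) < d1" .
      have n1: "norm (of_real b' + (1 - of_real e) * z) \<le> 5"
      proof -
        have "norm (of_real b' + (1 - of_real e) * z) \<le> \<bar>b'\<bar> + norm (1 - of_real e :: complex) * norm z"
          using norm_triangle_ineq[of "of_real b'" "(1 - of_real e) * z"] by (simp add: norm_mult)
        also have "norm (1 - of_real e :: complex) = 1 - e"
        proof -
          have "(1 - of_real e :: complex) = of_real (1 - e)" by simp
          then have "norm (1 - of_real e :: complex) = \<bar>1 - e\<bar>" by (simp only: norm_of_real)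
          then show ?thesis using e t0 by simp
        qed
        also have "(1 - e) * norm z \<le> 1 * norm z" using e by (intro mult_right_mono) auto
        finally show ?thesis using y2 zz by linarith
      qed
      have n2: "norm (z + of_real b') \<le> 5" using norm_triangle_ineq[of z "of_real b'"] zz y2 by simp
      show ?thesis using d1(2) dd n1 n2 by simp
    qed
    have "norm (PN Gm Gp b' e N z - Gp (z + of_real b'))
        \<le> norm ((\<Sum>\<nu>=0..N. of_nat (N choose \<nu>) * w^\<nu> * (1-w)^(N-\<nu>) * f \<nu>) - Gp (of_real y0 + of_nat N * of_real hr * w))
          + norm (Gp (of_real b' + (1 - of_real e) * z) - Gp (z + of_real b'))"
      unfolding PNe pN[symmetric] by (rule norm_diff_triangle_ineq[THEN order.trans[rotated]]) (simp add: norm_triangle_sub)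
    then show "norm (PN Gm Gp b' e N z - Gp (z + of_real b')) < \<epsilon>"
      using C cont small pN by simp
  qed
qed



lemma conv_helper:
  fixes \<epsilon> :: "'i \<Rightarrow> nat \<Rightarrow> real"
  assumes "\<exists>d>0. \<exists>N0. \<forall>N\<ge>N0. \<forall>e. 0 \<le> e \<and> e < d \<longrightarrow> P N e"
    and "\<forall>d>0. \<forall>\<^sub>F N in sequentially. \<forall>i\<in>I. \<epsilon> i N < d"
    and "\<forall>i\<in>I. \<forall>N\<ge>1. 0 \<le> \<epsilon> i N"
  shows "\<forall>\<^sub>F N in sequentially. \<forall>i\<in>I. P N (\<epsilon> i N)"
proof -
  obtain d N0 where d: "d > 0" "\<forall>N\<ge>N0. \<forall>e. 0 \<le> e \<and> e < d \<longrightarrow> P N e" using assms(1) by blast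
  have "\<forall>\<^sub>F N in sequentially. \<forall>i\<in>I. \<epsilon> i N < d" using assms(2) d(1) by blast
  moreover have "\<forall>\<^sub>F N in sequentially. max N0 1 \<le> N" by (rule eventually_ge_at_top)
  ultimately show ?thesis
    by eventually_elim (use d assms(3) in auto)
qed

lemma bound_exists:
  fixes Gm Gp :: "complex \<Rightarrow> complex"
  assumes "Gm holomorphic_on UNIV" "Gp holomorphic_on UNIV"
  shows "\<exists>M. \<forall>u\<in>cball 0 5. norm (Gm u) \<le> M \<and> norm (Gp u) \<le> M"
proof -
  have "continuous_on (cball 0 5) Gm" "continuous_on (cball 0 5) Gp"
    using assms holomorphic_on_imp_continuous_on holomorphic_on_subset by blast+
  then have "compact (Gm ` cball 0 5)" "compact (Gp ` cball 0 5)"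
    by (auto intro: compact_continuous_image)
  then obtain B1 B2 where "\<forall>x\<in>Gm ` cball 0 5. norm x \<le> B1" "\<forall>x\<in>Gp ` cball 0 5. norm x \<le> B2"
    by (meson bounded_iff compact_imp_bounded)
  then show ?thesis by (intro exI[of _ "max B1 B2"]) auto
qed

theorem mainTheorem3:
  fixes Gm Gp :: "complex \<Rightarrow> complex" and \<eta> :: real
  assumes "Gm holomorphic_on UNIV" and "Gp holomorphic_on UNIV"
    and "Gm (1/2) = Gp (1/2)"
    and "deriv Gm (1/2) \<noteq> deriv Gp (1/2)"
    and "0 < \<eta>" and "\<eta> < 1/2"
  shows "\<exists>Vm Vp :: complex set. open Vm \<and> 0 \<in> Vm \<and> open Vp \<and> 1 \<in> Vp \<and>
    (\<forall>\<epsilon> :: nat \<Rightarrow> real. (\<forall>N\<ge>1. 0 \<le> \<epsilon> N \<and> \<epsilon> N < 1) \<and> \<epsilon> \<longlonglongrightarrow> 0 \<longrightarrow>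
       (\<forall>K. compact K \<and> K \<subseteq> Vm \<longrightarrow> (\<forall>e>0. \<forall>\<^sub>F N in sequentially.
          \<forall>b'\<in>{-\<eta>..\<eta>}. \<forall>z\<in>K. norm (PN Gm Gp b' (\<epsilon> N) N z - Gm (z + of_real b')) < e)) \<and>
       (\<forall>K. compact K \<and> K \<subseteq> Vp \<longrightarrow> (\<forall>e>0. \<forall>\<^sub>F N in sequentially.
          \<forall>b'\<in>{-\<eta>..\<eta>}. \<forall>z\<in>K. norm (PN Gm Gp b' (\<epsilon> N) N z - Gp (z + of_real b')) < e))) \<and>
    (\<forall>(I :: 'i set) (\<epsilon> :: 'i \<Rightarrow> nat \<Rightarrow> real).
       (\<forall>i\<in>I. \<forall>N\<ge>1. 0 \<le> \<epsilon> i N \<and> \<epsilon> i N < 1) \<and>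
       (\<forall>i\<in>I. \<epsilon> i \<longlonglongrightarrow> 0) \<and>
       (\<forall>d>0. \<forall>\<^sub>F N in sequentially. \<forall>i\<in>I. \<epsilon> i N < d) \<longrightarrow>
       (\<forall>K. compact K \<and> K \<subseteq> Vm \<longrightarrow> (\<forall>e>0. \<forall>\<^sub>F N in sequentially.
          \<forall>i\<in>I. \<forall>b'\<in>{-\<eta>..\<eta>}. \<forall>z\<in>K. norm (PN Gm Gp b' (\<epsilon> i N) N z - Gm (z + of_real b')) < e)) \<and>
       (\<forall>K. compact K \<and> K \<subseteq> Vp \<longrightarrow> (\<forall>e>0. \<forall>\<^sub>F N in sequentially.
          \<forall>i\<in>I. \<forall>b'\<in>{-\<eta>..\<eta>}. \<forall>z\<in>K. norm (PN Gm Gp b' (\<epsilon> i N) N z - Gp (z + of_real b')) < e)))"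
proof -
  note hm = assms(1) and hp = assms(2) and \<eta> = assms(5,6)
  obtain M where M: "\<forall>u\<in>cball 0 5. norm (Gm u) \<le> M \<and> norm (Gp u) \<le> M"
    using bound_exists[OF hm hp] by blast
  obtain k :: nat where k0: "2 / (1/2 - \<eta>) \<le> real k" using real_arch_simple by blast
  have k: "2 \<le> real k * (1/2 - \<eta>)" using k0 \<eta> by (simp add: field_simps)
  define \<delta> :: real where "\<delta> = 1 / (4^k + 1)"
  have \<delta>0: "\<delta> > 0" by (simp add: \<delta>_def add_pos_pos)
  have SM: "\<forall>e0>0. \<exists>d>0. \<exists>N0. \<forall>N\<ge>N0. \<forall>e. 0 \<le> e \<and> e < d \<longrightarrow> (\<forall>b'\<in>{-\<eta>..\<eta>}. \<forall>z\<in>ball (0::complex) \<delta>.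
          norm (PN Gm Gp b' e N z - Gm (z + of_real b')) < e0)"
    using side_m[OF hm M \<eta> k] unfolding \<delta>_def by blast
  have SP: "\<forall>e0>0. \<exists>d>0. \<exists>N0. \<forall>N\<ge>N0. \<forall>e. 0 \<le> e \<and> e < d \<longrightarrow> (\<forall>b'\<in>{-\<eta>..\<eta>}. \<forall>z\<in>ball (1::complex) \<delta>.
          norm (PN Gm Gp b' e N z - Gp (z + of_real b')) < e0)"
    using side_p[OF hp M \<eta> k] unfolding \<delta>_def by blast
  show ?thesis
  proof (rule exI[of _ "ball (0::complex) \<delta>"], rule exI[of _ "ball (1::complex) \<delta>"], intro conjI allI impI)
    show "open (ball (0::complex) \<delta>)" by auto
    show "0 \<in> ball (0::complex) \<delta>" using \<delta>0 by auto
    show "open (ball (1::complex) \<delta>)" by auto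
    show "1 \<in> ball (1::complex) \<delta>" using \<delta>0 by auto
  next
    fix \<epsilon> :: "nat \<Rightarrow> real" and K :: "complex set" and e :: real
    assume H: "(\<forall>N\<ge>1. 0 \<le> \<epsilon> N \<and> \<epsilon> N < 1) \<and> \<epsilon> \<longlonglongrightarrow> 0" and KK: "compact K \<and> K \<subseteq> ball 0 \<delta>" and e: "e > 0"
    have d: "\<forall>d>0. \<forall>\<^sub>F N in sequentially. \<forall>i\<in>{()}. (\<lambda>_. \<epsilon>) i N < d"
      using H order_tendstoD(2) by auto
    have "\<forall>\<^sub>F N in sequentially. \<forall>i\<in>{()}. (\<forall>b'\<in>{-\<eta>..\<eta>}. \<forall>z\<in>ball (0::complex) \<delta>.
          norm (PN Gm Gp b' ((\<lambda>_. \<epsilon>) i N) N z - Gm (z + of_real b')) < e)"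
      by (rule conv_helper[OF SM[rule_format, OF e] d]) (use H in auto)
    then show "\<forall>\<^sub>F N in sequentially. \<forall>b'\<in>{-\<eta>..\<eta>}. \<forall>z\<in>K. norm (PN Gm Gp b' (\<epsilon> N) N z - Gm (z + of_real b')) < e"
      by eventually_elim (use KK in auto)
  next
    fix \<epsilon> :: "nat \<Rightarrow> real" and K :: "complex set" and e :: real
    assume H: "(\<forall>N\<ge>1. 0 \<le> \<epsilon> N \<and> \<epsilon> N < 1) \<and> \<epsilon> \<longlonglongrightarrow> 0" and KK: "compact K \<and> K \<subseteq> ball 1 \<delta>" and e: "e > 0"
    have d: "\<forall>d>0. \<forall>\<^sub>F N in sequentially. \<forall>i\<in>{()}. (\<lambda>_. \<epsilon>) i N < d"
      using H order_tendstoD(2) by auto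
    have "\<forall>\<^sub>F N in sequentially. \<forall>i\<in>{()}. (\<forall>b'\<in>{-\<eta>..\<eta>}. \<forall>z\<in>ball (1::complex) \<delta>.
          norm (PN Gm Gp b' ((\<lambda>_. \<epsilon>) i N) N z - Gp (z + of_real b')) < e)"
      by (rule conv_helper[OF SP[rule_format, OF e] d]) (use H in auto)
    then show "\<forall>\<^sub>F N in sequentially. \<forall>b'\<in>{-\<eta>..\<eta>}. \<forall>z\<in>K. norm (PN Gm Gp b' (\<epsilon> N) N z - Gp (z + of_real b')) < e"
      by eventually_elim (use KK in auto)
  next
    fix I :: "'i set" and \<epsilon> :: "'i \<Rightarrow> nat \<Rightarrow> real" and K :: "complex set" and e :: real
    assume H: "(\<forall>i\<in>I. \<forall>N\<ge>1. 0 \<le> \<epsilon> i N \<and> \<epsilon> i N < 1) \<and> (\<forall>i\<in>I. \<epsilon> i \<longlonglongrightarrow> 0) \<and>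
       (\<forall>d>0. \<forall>\<^sub>F N in sequentially. \<forall>i\<in>I. \<epsilon> i N < d)"
      and KK: "compact K \<and> K \<subseteq> ball 0 \<delta>" and e: "e > 0"
    have "\<forall>\<^sub>F N in sequentially. \<forall>i\<in>I. (\<forall>b'\<in>{-\<eta>..\<eta>}. \<forall>z\<in>ball (0::complex) \<delta>.
          norm (PN Gm Gp b' (\<epsilon> i N) N z - Gm (z + of_real b')) < e)"
      by (rule conv_helper[OF SM[rule_format, OF e]]) (use H in auto)
    then show "\<forall>\<^sub>F N in sequentially. \<forall>i\<in>I. \<forall>b'\<in>{-\<eta>..\<eta>}. \<forall>z\<in>K. norm (PN Gm Gp b' (\<epsilon> i N) N z - Gm (z + of_real b')) < e"
      by eventually_elim (use KK in auto)
  next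
    fix I :: "'i set" and \<epsilon> :: "'i \<Rightarrow> nat \<Rightarrow> real" and K :: "complex set" and e :: real
    assume H: "(\<forall>i\<in>I. \<forall>N\<ge>1. 0 \<le> \<epsilon> i N \<and> \<epsilon> i N < 1) \<and> (\<forall>i\<in>I. \<epsilon> i \<longlonglongrightarrow> 0) \<and>
       (\<forall>d>0. \<forall>\<^sub>F N in sequentially. \<forall>i\<in>I. \<epsilon> i N < d)"
      and KK: "compact K \<and> K \<subseteq> ball 1 \<delta>" and e: "e > 0"
    have "\<forall>\<^sub>F N in sequentially. \<forall>i\<in>I. (\<forall>b'\<in>{-\<eta>..\<eta>}. \<forall>z\<in>ball (1::complex) \<delta>.
          norm (PN Gm Gp b' (\<epsilon> i N) N z - Gp (z + of_real b')) < e)"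
      by (rule conv_helper[OF SP[rule_format, OF e]]) (use H in auto)
    then show "\<forall>\<^sub>F N in sequentially. \<forall>i\<in>I. \<forall>b'\<in>{-\<eta>..\<eta>}. \<forall>z\<in>K. norm (PN Gm Gp b' (\<epsilon> i N) N z - Gp (z + of_real b')) < e"
      by eventually_elim (use KK in auto)
  qed
qed


end
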